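(* Let $(X,G)$ be a minimal topological dynamical system. The set $\mathcal V=\{F\in 2^X: V(F)=\pi_{eq}(F)\}$ is a compact $G$-invariant subset of $2^X$.
   Context: $G$ is an infinite countable discrete group; a tds $(X,G)$ is a compact metric space with a $G$-action by homeomorphisms; minimal means no proper nonempty closed invariant subset. $\pi_{eq}:X\to X_{eq}$ is the factor map onto the maximal equicontinuous factor, $\nu_{eq}$ the unique invariant probability measure of $(X_{eq},G)$. $2^X$ is the space of nonempty closed subsets with the Hausdorff metric $d_H$, with action $gA=\{ga:a\in A\}$. $\mathcal X=\overline{\{\pi_{eq}^{-1}(y):y\in X_{eq}\}}\subset 2^X$; for $E\in\mathcal X$, $\pi_{\mathcal X}(E)$ is the single point $\pi_{eq}(E)$. $\mathcal X_{eq}^{\mathrm{meas}}=\{E\in\mathcal X:\nu_{eq}(\pi_{\mathcal X}(B^{\mathcal X}_\epsilon(E)))>0\ \forall\epsilon>0\}$, $B^{\mathcal X}_\epsilon(E)$ the open $d_H$-ball in $\mathcal X$. For $F\in 2^X$, $V(F)=\{y\in X_{eq}:\exists E\in\mathcal X_{eq}^{\mathrm{meas}}, E\subset F,\ \pi_{\mathcal X}(E)=y\}$. *)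

theory Defs
  imports "HOL-Analysis.Analysis" "HOL-Probability.Probability"
begin

text \<open>A group G (a type of class group_add, written additively, not necessarily abelian)
acts on a compact metric space X (a compact subset of a metric space type) by homeomorphisms.\<close>

definition tds :: "'a::metric_space set \<Rightarrow> ('g::group_add \<Rightarrow> 'a \<Rightarrow> 'a) \<Rightarrow> bool" where
  "tds X act \<longleftrightarrow> compact X \<and>
     (\<forall>g. continuous_on X (act g) \<and> act g ` X \<subseteq> X) \<and>
     (\<forall>x\<in>X. act 0 x = x) \<and>
     (\<forall>g h. \<forall>x\<in>X. act (g + h) x = act g (act h x))"

definition minimal_tds :: "'a::metric_space set \<Rightarrow> ('g::group_add \<Rightarrow> 'a \<Rightarrow> 'a) \<Rightarrow> bool" where
  "minimal_tds X act \<longleftrightarrow> tds X act \<and> X \<noteq> {} \<and>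
     (\<forall>A. A \<subseteq> X \<and> closed A \<and> A \<noteq> {} \<and> (\<forall>g. act g ` A \<subseteq> A) \<longrightarrow> A = X)"

definition equicontinuous_tds :: "'a::metric_space set \<Rightarrow> ('g \<Rightarrow> 'a \<Rightarrow> 'a) \<Rightarrow> bool" where
  "equicontinuous_tds X act \<longleftrightarrow>
     (\<forall>e>0. \<exists>d>0. \<forall>x\<in>X. \<forall>y\<in>X. dist x y < d \<longrightarrow> (\<forall>g. dist (act g x) (act g y) < e))"

definition factor_map ::
  "'a::metric_space set \<Rightarrow> ('g \<Rightarrow> 'a \<Rightarrow> 'a) \<Rightarrow> 'b::metric_space set \<Rightarrow> ('g \<Rightarrow> 'b \<Rightarrow> 'b)
     \<Rightarrow> ('a \<Rightarrow> 'b) \<Rightarrow> bool" where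
  "factor_map X actX Y actY p \<longleftrightarrow> continuous_on X p \<and> p ` X = Y \<and>
     (\<forall>g. \<forall>x\<in>X. p (actX g x) = actY g (p x))"

text \<open>Test factors range over compact subsets of the
Hilbert-cube-like space nat => real (product metric), which contains a homeomorphic copy of
every compact metric space; equicontinuity of a compact system does not depend on the
compatible metric.\<close>

definition max_eq_factor ::
  "'a::metric_space set \<Rightarrow> ('g::group_add \<Rightarrow> 'a \<Rightarrow> 'a) \<Rightarrow> 'b::metric_space set \<Rightarrow> ('g \<Rightarrow> 'b \<Rightarrow> 'b)
     \<Rightarrow> ('a \<Rightarrow> 'b) \<Rightarrow> bool" where
  "max_eq_factor X act Y actY p \<longleftrightarrow>
     tds Y actY \<and> equicontinuous_tds Y actY \<and> factor_map X act Y actY p \<and>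
     (\<forall>(Z :: (nat \<Rightarrow> real) set) actZ q.
        tds Z actZ \<and> equicontinuous_tds Z actZ \<and> factor_map X act Z actZ q \<longrightarrow>
        (\<exists>r. factor_map Y actY Z actZ r \<and> (\<forall>x\<in>X. q x = r (p x))))"

definition invariant_prob :: "'b::metric_space set \<Rightarrow> ('g \<Rightarrow> 'b \<Rightarrow> 'b) \<Rightarrow> 'b measure \<Rightarrow> bool" where
  "invariant_prob Y actY \<nu> \<longleftrightarrow> prob_space \<nu> \<and> sets \<nu> = sets (restrict_space borel Y) \<and>
     (\<forall>g. \<forall>A\<in>sets \<nu>. emeasure \<nu> (actY g -` A \<inter> Y) = emeasure \<nu> A)"

definition hausdorff_dist :: "'a::metric_space set \<Rightarrow> 'a set \<Rightarrow> real" where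
  "hausdorff_dist A B =
     (if A \<noteq> {} \<and> B \<noteq> {} \<and> bounded A \<and> bounded B
      then max (SUP a\<in>A. infdist a B) (SUP b\<in>B. infdist b A) else 0)"

definition hyperspace :: "'a::metric_space set \<Rightarrow> 'a set set" where
  "hyperspace X = {A. A \<subseteq> X \<and> closed A \<and> A \<noteq> {}}"

abbreviation hyper_top :: "'a::metric_space set \<Rightarrow> 'a set topology" where
  "hyper_top X \<equiv> Metric_space.mtopology (hyperspace X) hausdorff_dist"

definition fibre_closure :: "'a::metric_space set \<Rightarrow> ('a \<Rightarrow> 'b) \<Rightarrow> 'b set \<Rightarrow> 'a set set" where
  "fibre_closure X p Y = hyper_top X closure_of {p -` {y} \<inter> X | y. y \<in> Y}"

definition pi_X :: "('a \<Rightarrow> 'b) \<Rightarrow> 'a set \<Rightarrow> 'b" where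
  "pi_X p E = the_elem (p ` E)"

definition fibre_meas ::
  "'a::metric_space set \<Rightarrow> ('a \<Rightarrow> 'b) \<Rightarrow> 'b set \<Rightarrow> 'b measure \<Rightarrow> 'a set set" where
  "fibre_meas X p Y \<nu> = {E \<in> fibre_closure X p Y. \<forall>e>0.
      measure \<nu> (pi_X p ` (Metric_space.mball (fibre_closure X p Y) hausdorff_dist E e)) > 0}"

definition Vset ::
  "'a::metric_space set \<Rightarrow> ('a \<Rightarrow> 'b) \<Rightarrow> 'b set \<Rightarrow> 'b measure \<Rightarrow> 'a set \<Rightarrow> 'b set" where
  "Vset X p Y \<nu> F = {y \<in> Y. \<exists>E\<in>fibre_meas X p Y \<nu>. E \<subseteq> F \<and> pi_X p E = y}"

end

theory Submission
  imports Defs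
begin


lemma infdist_bdd_above:
  fixes A B :: "'a::metric_space set"
  assumes "bounded A" "B \<noteq> {}"
  shows "bdd_above ((\<lambda>a. infdist a B) ` A)"
proof -
  obtain b0 where b0: "b0 \<in> B" using assms by blast
  obtain x e where xe: "\<forall>y\<in>A. dist x y \<le> e" using assms(1) unfolding bounded_def by blast
  have "infdist a B \<le> e + dist x b0" if "a \<in> A" for a
  proof -
    have "infdist a B \<le> dist a b0" using b0 infdist_le by blast
    also have "\<dots> \<le> dist x a + dist x b0" by (metis dist_commute dist_triangle)
    also have "\<dots> \<le> e + dist x b0" using xe that by auto
    finally show ?thesis .
  qed
  then show ?thesis by (rule bdd_aboveI2)
qed

lemma hd_nonneg: "0 \<le> hausdorff_dist A B"
proof (cases "A \<noteq> {} \<and> B \<noteq> {} \<and> bounded A \<and> bounded B")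
  case True
  then obtain a where a: "a \<in> A" by blast
  have "0 \<le> infdist a B" by (rule infdist_nonneg)
  also have "\<dots> \<le> (SUP a\<in>A. infdist a B)"
    using True a by (intro cSUP_upper infdist_bdd_above) auto
  finally show ?thesis unfolding hausdorff_dist_def using True by auto
qed (auto simp: hausdorff_dist_def)

lemma hd_sym: "hausdorff_dist A B = hausdorff_dist B A"
  unfolding hausdorff_dist_def by (auto simp: max.commute)

lemma infdist_cpt_attained:
  fixes B :: "'a::metric_space set"
  assumes "compact B" "B \<noteq> {}"
  obtains b where "b \<in> B" "infdist a B = dist a b"
proof -
  have "continuous_on B (dist a)" by (intro continuous_intros)
  then obtain b where b: "b \<in> B" "\<forall>y\<in>B. dist a b \<le> dist a y"
    using continuous_attains_inf[OF assms] by blast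
  then have "infdist a B = dist a b"
    by (metis antisym assms(2) cINF_greatest infdist_def infdist_le)
  with b show ?thesis using that by blast
qed

lemma infdist_le_iff_cpt:
  fixes B :: "'a::metric_space set"
  assumes "compact B" "B \<noteq> {}"
  shows "infdist a B \<le> e \<longleftrightarrow> (\<exists>b\<in>B. dist a b \<le> e)"
  using infdist_cpt_attained[OF assms, of a] infdist_le by (metis order_trans)

lemma hd_le_iff:
  fixes A B :: "'a::metric_space set"
  assumes "compact A" "compact B" "A \<noteq> {}" "B \<noteq> {}"
  shows "hausdorff_dist A B \<le> e \<longleftrightarrow>
     (\<forall>a\<in>A. \<exists>b\<in>B. dist a b \<le> e) \<and> (\<forall>b\<in>B. \<exists>a\<in>A. dist a b \<le> e)"
proof -
  have bA: "bounded A" and bB: "bounded B" using assms compact_imp_bounded by auto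
  have "hausdorff_dist A B = max (SUP a\<in>A. infdist a B) (SUP b\<in>B. infdist b A)"
    using assms bA bB unfolding hausdorff_dist_def by auto
  then have "hausdorff_dist A B \<le> e \<longleftrightarrow> (\<forall>a\<in>A. infdist a B \<le> e) \<and> (\<forall>b\<in>B. infdist b A \<le> e)"
    using assms bA bB by (simp add: cSUP_le_iff infdist_bdd_above)
  also have "\<dots> \<longleftrightarrow> (\<forall>a\<in>A. \<exists>b\<in>B. dist a b \<le> e) \<and> (\<forall>b\<in>B. \<exists>a\<in>A. dist a b \<le> e)"
    using assms by (simp add: infdist_le_iff_cpt dist_commute)
  finally show ?thesis .
qed

lemma hd_lt1:
  fixes A B :: "'a::metric_space set"
  assumes "compact A" "compact B" "A \<noteq> {}" "B \<noteq> {}" "hausdorff_dist A B < e" "a \<in> A"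
  shows "\<exists>b\<in>B. dist a b < e"
  using hd_le_iff[OF assms(1-4), of "hausdorff_dist A B"] assms(5,6) by force

lemma hd_lt2:
  fixes A B :: "'a::metric_space set"
  assumes "compact A" "compact B" "A \<noteq> {}" "B \<noteq> {}" "hausdorff_dist A B < e" "b \<in> B"
  shows "\<exists>a\<in>A. dist a b < e"
  using hd_le_iff[OF assms(1-4), of "hausdorff_dist A B"] assms(5,6) by force

lemma hd_triangle:
  fixes A B C :: "'a::metric_space set"
  assumes "compact A" "compact B" "compact C" "A \<noteq> {}" "B \<noteq> {}" "C \<noteq> {}"
  shows "hausdorff_dist A C \<le> hausdorff_dist A B + hausdorff_dist B C"
proof -
  have AB: "(\<forall>a\<in>A. \<exists>b\<in>B. dist a b \<le> hausdorff_dist A B) \<and> (\<forall>b\<in>B. \<exists>a\<in>A. dist a b \<le> hausdorff_dist A B)"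
    using hd_le_iff[of A B "hausdorff_dist A B"] assms by auto
  have BC: "(\<forall>a\<in>B. \<exists>b\<in>C. dist a b \<le> hausdorff_dist B C) \<and> (\<forall>b\<in>C. \<exists>a\<in>B. dist a b \<le> hausdorff_dist B C)"
    using hd_le_iff[of B C "hausdorff_dist B C"] assms by auto
  show ?thesis
    unfolding hd_le_iff[OF assms(1,3,4,6)]
  proof safe
    fix a assume "a \<in> A"
    then obtain b where b: "b \<in> B" "dist a b \<le> hausdorff_dist A B" using AB by blast
    then obtain c where c: "c \<in> C" "dist b c \<le> hausdorff_dist B C" using BC by blast
    have "dist a c \<le> dist a b + dist b c" by (rule dist_triangle)
    then show "\<exists>c\<in>C. dist a c \<le> hausdorff_dist A B + hausdorff_dist B C" using b c by force
  next
    fix c assume "c \<in> C"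
    then obtain b where b: "b \<in> B" "dist b c \<le> hausdorff_dist B C" using BC by blast
    then obtain a where a: "a \<in> A" "dist a b \<le> hausdorff_dist A B" using AB by blast
    have "dist a c \<le> dist a b + dist b c" by (rule dist_triangle)
    then show "\<exists>a\<in>A. dist a c \<le> hausdorff_dist A B + hausdorff_dist B C" using a b by force
  qed
qed

lemma hd_zero:
  fixes A B :: "'a::metric_space set"
  assumes "compact A" "compact B" "A \<noteq> {}" "B \<noteq> {}"
  shows "hausdorff_dist A B = 0 \<longleftrightarrow> A = B"
proof
  assume "hausdorff_dist A B = 0"
  then have "hausdorff_dist A B \<le> 0" by simp
  then show "A = B" unfolding hd_le_iff[OF assms] by force
next
  assume "A = B"
  then have "hausdorff_dist A B \<le> 0" using hd_le_iff[OF assms] by force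
  then show "hausdorff_dist A B = 0" using hd_nonneg by (metis order_antisym)
qed

lemma hyperspace_compact:
  assumes "compact X" "A \<in> hyperspace X"
  shows "compact A" "A \<noteq> {}" "A \<subseteq> X" "closed A"
  using assms unfolding hyperspace_def by (auto, metis compact_Int_closed inf.absorb2)

lemma hyper_metric:
  assumes "compact X"
  shows "Metric_space (hyperspace X) hausdorff_dist"
proof
  show "\<And>x y. 0 \<le> hausdorff_dist x y" by (rule hd_nonneg)
  show "\<And>x y. hausdorff_dist x y = hausdorff_dist y x" by (rule hd_sym)
  show "\<And>x y. x \<in> hyperspace X \<Longrightarrow> y \<in> hyperspace X \<Longrightarrow> (hausdorff_dist x y = 0) = (x = y)"
    using hd_zero hyperspace_compact[OF assms] by metis
  show "\<And>x y z. x \<in> hyperspace X \<Longrightarrow> y \<in> hyperspace X \<Longrightarrow> z \<in> hyperspace X \<Longrightarrow>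
     hausdorff_dist x z \<le> hausdorff_dist x y + hausdorff_dist y z"
    using hd_triangle hyperspace_compact[OF assms] by metis
qed



lemma hyper_tb:
  assumes "compact X"
  shows "Metric_space.mtotally_bounded (hyperspace X) hausdorff_dist (hyperspace X)"
proof -
  interpret H: Metric_space "hyperspace X" hausdorff_dist by (rule hyper_metric[OF assms])
  show ?thesis unfolding H.mtotally_bounded_def
  proof (intro allI impI)
    fix e :: real assume e: "e > 0"
    obtain N where N: "N \<subseteq> X" "finite N" "X \<subseteq> (\<Union>k\<in>N. ball k (e/2))"
    proof (rule compactE_image[OF assms, of X "\<lambda>k. ball k (e/2)"])
      show "X \<subseteq> (\<Union>k\<in>X. ball k (e/2))" using e by auto
    qed auto
    define K where "K = {S. S \<subseteq> N \<and> S \<noteq> {}}"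
    have "finite K" unfolding K_def using N(2) by (auto intro: finite_subset[of _ "Pow N"])
    moreover have "K \<subseteq> hyperspace X"
      unfolding K_def hyperspace_def using N by (auto intro: finite_imp_closed finite_subset)
    moreover have "hyperspace X \<subseteq> (\<Union>S\<in>K. H.mball S e)"
    proof
      fix A assume A: "A \<in> hyperspace X"
      note Ah = hyperspace_compact[OF assms A]
      define S where "S = {k\<in>N. \<exists>a\<in>A. dist a k < e/2}"
      have cov: "\<exists>k\<in>S. dist a k < e/2" if "a \<in> A" for a
      proof -
        have "a \<in> X" using Ah(3) that by blast
        then obtain k where "k \<in> N" "a \<in> ball k (e/2)" using N(3) by blast
        then have kN: "k \<in> N" and d: "dist a k < e/2" by (auto simp: dist_commute)
        have "k \<in> S" unfolding S_def using kN d that by blast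
        then show ?thesis using d by blast
      qed
      have "S \<noteq> {}" using cov Ah(2) by blast
      have Sf: "finite S" unfolding S_def using N(2) by auto
      have SK: "S \<in> K" unfolding K_def S_def using \<open>S \<noteq> {}\<close> S_def by auto
      have SH: "S \<in> hyperspace X" using SK \<open>K \<subseteq> hyperspace X\<close> by auto
      have "hausdorff_dist S A \<le> e/2"
        unfolding hd_le_iff[OF finite_imp_compact[OF Sf] Ah(1) \<open>S \<noteq> {}\<close> Ah(2)]
        using cov unfolding S_def by (force simp: dist_commute)
      then have "A \<in> H.mball S e" using SH A e by auto
      then show "A \<in> (\<Union>S\<in>K. H.mball S e)" using SK by blast
    qed
    ultimately show "\<exists>K. finite K \<and> K \<subseteq> hyperspace X \<and> hyperspace X \<subseteq> (\<Union>x\<in>K. H.mball x e)"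
      by blast
  qed
qed

lemma hyper_complete:
  assumes "compact X"
  shows "Metric_space.mcomplete (hyperspace X) hausdorff_dist"
proof -
  interpret H: Metric_space "hyperspace X" hausdorff_dist by (rule hyper_metric[OF assms])
  show ?thesis unfolding H.mcomplete_def
  proof (intro allI impI)
    fix \<sigma> assume C: "H.MCauchy \<sigma>"
    then have \<sigma>H: "\<And>n. \<sigma> n \<in> hyperspace X" unfolding H.MCauchy_def by auto
    note \<sigma>c = hyperspace_compact[OF assms \<sigma>H]
    define L where "L = (\<Inter>N. closure (\<Union>n\<in>{N..}. \<sigma> n))"
    have Lchar: "x \<in> L \<longleftrightarrow> (\<forall>N. \<forall>e>0. \<exists>n\<ge>N. \<exists>y\<in>\<sigma> n. dist y x < e)" for x
      by (simp add: L_def closure_approachable) blast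
    have "closed L" unfolding L_def by auto
    have "closure (\<Union>n\<in>{0..}. \<sigma> n) \<subseteq> X"
      using \<sigma>c(3) by (intro closure_minimal) (auto simp: compact_imp_closed assms)
    then have LX: "L \<subseteq> X" unfolding L_def by blast
    have "compact L" using LX \<open>closed L\<close> assms by (metis compact_Int_closed inf.absorb2)
    have key: "\<exists>N0. \<forall>n\<ge>N0. (\<forall>x\<in>L. \<exists>z\<in>\<sigma> n. dist x z \<le> 2*e) \<and> (\<forall>a\<in>\<sigma> n. \<exists>x\<in>L. dist a x \<le> e)"
      if e: "e > 0" for e
    proof -
      obtain N0 where N0: "\<And>n n'. N0 \<le> n \<Longrightarrow> N0 \<le> n' \<Longrightarrow> hausdorff_dist (\<sigma> n) (\<sigma> n') < e"
        using C e unfolding H.MCauchy_def by meson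
      have "(\<forall>x\<in>L. \<exists>z\<in>\<sigma> n. dist x z \<le> 2*e) \<and> (\<forall>a\<in>\<sigma> n. \<exists>x\<in>L. dist a x \<le> e)" if n: "n \<ge> N0" for n
      proof safe
        fix x assume "x \<in> L"
        then obtain m y where m: "m \<ge> N0" "y \<in> \<sigma> m" "dist y x < e" using Lchar e by blast
        obtain z where z: "z \<in> \<sigma> n" "dist y z < e"
          using hd_lt1[OF \<sigma>c(1) \<sigma>c(1) \<sigma>c(2) \<sigma>c(2) N0[OF m(1) n] m(2)] by blast
        have "dist x z \<le> dist y x + dist y z" by (rule dist_triangle3)
        then show "\<exists>z\<in>\<sigma> n. dist x z \<le> 2*e" using z m by force
      next
        fix a assume a: "a \<in> \<sigma> n"
        have "\<exists>b. b \<in> \<sigma> (m + N0) \<and> dist a b < e" for m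
          using hd_lt1[OF \<sigma>c(1) \<sigma>c(1) \<sigma>c(2) \<sigma>c(2) N0[OF n, of "m + N0"] a] by auto
        then obtain b where b: "\<And>m. b m \<in> \<sigma> (m + N0)" "\<And>m. dist a (b m) < e" by metis
        have "\<forall>m. b m \<in> X" using b(1) \<sigma>c(3) by blast
        then obtain l r where lr: "l \<in> X" "strict_mono r" "(b \<circ> r) \<longlonglongrightarrow> l"
          using seq_compactE[OF compact_imp_seq_compact[OF assms]] by metis
        have "(\<lambda>k. dist a ((b \<circ> r) k)) \<longlonglongrightarrow> dist a l"
          by (intro tendsto_intros lr(3))
        then have "dist a l \<le> e"
          by (rule LIMSEQ_le_const2) (use b(2) less_imp_le in auto)
        moreover have "l \<in> L"
          unfolding Lchar
        proof (intro allI impI)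
          fix N :: nat and e' :: real assume "e' > 0"
          then obtain K where K: "\<And>k. k \<ge> K \<Longrightarrow> dist ((b \<circ> r) k) l < e'"
            using lr(3) unfolding lim_sequentially by blast
          define k where "k = max K N"
          have "r k \<ge> k" using lr(2) seq_suble by blast
          then have "r k + N0 \<ge> N" unfolding k_def by auto
          moreover have "b (r k) \<in> \<sigma> (r k + N0)" by (rule b(1))
          moreover have "dist (b (r k)) l < e'" using K[of k] unfolding k_def by auto
          ultimately show "\<exists>n\<ge>N. \<exists>y\<in>\<sigma> n. dist y l < e'" by blast
        qed
        ultimately show "\<exists>x\<in>L. dist a x \<le> e" by blast
      qed
      then show ?thesis by blast
    qed
    obtain N1 where N1: "\<forall>n\<ge>N1. (\<forall>x\<in>L. \<exists>z\<in>\<sigma> n. dist x z \<le> 2*1) \<and> (\<forall>a\<in>\<sigma> n. \<exists>x\<in>L. dist a x \<le> 1)"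
      using key[of 1] zero_less_one by blast
    then have "L \<noteq> {}" using \<sigma>c(2)[of N1] by blast
    then have LH: "L \<in> hyperspace X" unfolding hyperspace_def using LX \<open>closed L\<close> by auto
    have "limitin H.mtopology \<sigma> L sequentially"
      unfolding H.limit_metric_sequentially
    proof (intro conjI allI impI LH)
      fix e :: real assume e: "e > 0"
      obtain N0 where N0: "\<forall>n\<ge>N0. (\<forall>x\<in>L. \<exists>z\<in>\<sigma> n. dist x z \<le> 2*(e/3)) \<and> (\<forall>a\<in>\<sigma> n. \<exists>x\<in>L. dist a x \<le> e/3)"
        using key[of "e/3"] e by auto
      have "hausdorff_dist (\<sigma> n) L < e" if "n \<ge> N0" for n
      proof -
        have "hausdorff_dist (\<sigma> n) L \<le> 2*(e/3)"
          unfolding hd_le_iff[OF \<sigma>c(1) \<open>compact L\<close> \<sigma>c(2) \<open>L \<noteq> {}\<close>]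
          using N0 that e by (force simp: dist_commute)
        then show ?thesis using e by linarith
      qed
      then show "\<exists>N. \<forall>n\<ge>N. \<sigma> n \<in> hyperspace X \<and> hausdorff_dist (\<sigma> n) L < e"
        using \<sigma>H by blast
    qed
    then show "\<exists>x. limitin H.mtopology \<sigma> x sequentially" by blast
  qed
qed

lemma hyper_compact_space:
  assumes "compact X"
  shows "compact_space (hyper_top X)"
  using Metric_space.compact_space_eq_mcomplete_mtotally_bounded[OF hyper_metric[OF assms]]
    hyper_tb[OF assms] hyper_complete[OF assms] by blast



locale setting =
  fixes X :: "'a::metric_space set" and act :: "'g::group_add \<Rightarrow> 'a \<Rightarrow> 'a"
    and Y :: "'b::metric_space set" and actY :: "'g \<Rightarrow> 'b \<Rightarrow> 'b"
    and p :: "'a \<Rightarrow> 'b" and \<nu> :: "'b measure"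
  assumes tdsX: "tds X act" and tdsY: "tds Y actY" and fm: "factor_map X act Y actY p"
    and invp: "invariant_prob Y actY \<nu>"
begin

lemma cX: "compact X" using tdsX unfolding tds_def by auto
lemma pcont: "continuous_on X p" using fm unfolding factor_map_def by auto
lemma pXY: "p ` X = Y" using fm unfolding factor_map_def by auto
lemma peq: "x \<in> X \<Longrightarrow> p (act g x) = actY g (p x)" using fm unfolding factor_map_def by auto
lemma cY: "compact Y" using compact_continuous_image[OF pcont cX] pXY by simp
lemma puc: "uniformly_continuous_on X p" using compact_uniformly_continuous[OF pcont cX] .

sublocale H: Metric_space "hyperspace X" hausdorff_dist by (rule hyper_metric[OF cX])

abbreviation "Fib \<equiv> {p -` {y} \<inter> X | y. y \<in> Y}"
abbreviation "FC \<equiv> fibre_closure X p Y"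

lemma fibH: "y \<in> Y \<Longrightarrow> p -` {y} \<inter> X \<in> hyperspace X"
proof -
  assume y: "y \<in> Y"
  have "closed (X \<inter> p -` {y})"
    by (rule continuous_closed_preimage[OF pcont compact_imp_closed[OF cX]]) auto
  moreover have "p -` {y} \<inter> X \<noteq> {}" using y pXY by auto
  ultimately show ?thesis unfolding hyperspace_def by (auto simp: Int_commute)
qed

lemma FCeq: "FC = {x \<in> hyperspace X. \<forall>r>0. \<exists>S\<in>Fib. S \<in> H.mball x r}"
  unfolding fibre_closure_def by (rule H.metric_closure_of)

lemma Fib_ex: "(\<exists>S\<in>Fib. P S) \<longleftrightarrow> (\<exists>y\<in>Y. P (p -` {y} \<inter> X))"
  by blast

lemma FC_char: "E \<in> FC \<longleftrightarrow> E \<in> hyperspace X \<and> (\<forall>r>0. \<exists>y\<in>Y. hausdorff_dist E (p -` {y} \<inter> X) < r)"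
proof -
  have "E \<in> FC \<longleftrightarrow> E \<in> hyperspace X \<and> (\<forall>r>0. \<exists>y\<in>Y. p -` {y} \<inter> X \<in> H.mball E r)"
    unfolding FCeq mem_Collect_eq Fib_ex ..
  also have "\<dots> \<longleftrightarrow> E \<in> hyperspace X \<and> (\<forall>r>0. \<exists>y\<in>Y. hausdorff_dist E (p -` {y} \<inter> X) < r)"
    using fibH H.in_mball by meson
  finally show ?thesis .
qed

lemma FC_H: "FC \<subseteq> hyperspace X"
  unfolding FCeq by (rule subsetI) (drule CollectD, erule conjunct1)

lemma FC_point: assumes "E \<in> FC" shows "\<exists>c\<in>Y. p ` E = {c}"
proof -
  have EH: "E \<in> hyperspace X" and R: "\<forall>r>0. \<exists>y\<in>Y. hausdorff_dist E (p -` {y} \<inter> X) < r"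
    using assms unfolding FC_char[of E] by auto
  note Ec = hyperspace_compact[OF cX EH]
  have same: "p e1 = p e2" if e: "e1 \<in> E" "e2 \<in> E" for e1 e2
  proof (rule ccontr)
    assume ne: "p e1 \<noteq> p e2"
    define \<epsilon> where "\<epsilon> = dist (p e1) (p e2) / 3"
    have \<epsilon>: "\<epsilon> > 0" using ne unfolding \<epsilon>_def by auto
    have "\<exists>\<delta>>0. \<forall>x\<in>X. \<forall>x'\<in>X. dist x' x < \<delta> \<longrightarrow> dist (p x') (p x) < \<epsilon>"
      using puc \<epsilon> unfolding uniformly_continuous_on_def by blast
    then obtain \<delta> where \<delta>0: "\<delta> > 0" and \<delta>1: "\<forall>x\<in>X. \<forall>x'\<in>X. dist x' x < \<delta> \<longrightarrow> dist (p x') (p x) < \<epsilon>"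
      by blast
    have \<delta>: "\<delta> > 0" "\<And>x x'. x \<in> X \<Longrightarrow> x' \<in> X \<Longrightarrow> dist x' x < \<delta> \<Longrightarrow> dist (p x') (p x) < \<epsilon>"
      using \<delta>0 \<delta>1 by auto
    obtain y where y: "y \<in> Y" "hausdorff_dist E (p -` {y} \<inter> X) < \<delta>" using R \<delta>(1) by blast
    note Fc = hyperspace_compact[OF cX fibH[OF y(1)]]
    obtain x1 where x1: "x1 \<in> p -` {y} \<inter> X" "dist e1 x1 < \<delta>"
      using hd_lt1[OF Ec(1) Fc(1) Ec(2) Fc(2) y(2) e(1)] by blast
    obtain x2 where x2: "x2 \<in> p -` {y} \<inter> X" "dist e2 x2 < \<delta>"
      using hd_lt1[OF Ec(1) Fc(1) Ec(2) Fc(2) y(2) e(2)] by blast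
    have "dist y (p e1) < \<epsilon>" using \<delta>(2)[of x1 e1] x1 e Ec(3) by (auto simp: dist_commute)
    moreover have "dist y (p e2) < \<epsilon>" using \<delta>(2)[of x2 e2] x2 e Ec(3) by (auto simp: dist_commute)
    ultimately have "dist (p e1) (p e2) < 2 * \<epsilon>" using dist_triangle3[of "p e1" "p e2" y] by linarith
    then show False unfolding \<epsilon>_def by auto
  qed
  obtain e where "e \<in> E" using Ec(2) by blast
  have "p ` E = {p e}"
  proof (intro equalityI subsetI)
    fix z assume "z \<in> p ` E"
    then obtain e' where "e' \<in> E" "z = p e'" by blast
    then show "z \<in> {p e}" using same[of e' e] \<open>e \<in> E\<close> by simp
  next
    fix z assume "z \<in> {p e}"
    then show "z \<in> p ` E" using \<open>e \<in> E\<close> by simp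
  qed
  moreover have "p e \<in> Y" using \<open>e \<in> E\<close> Ec(3) pXY by auto
  ultimately show ?thesis by blast
qed

lemma pi_FC: assumes "E \<in> FC" "e \<in> E" shows "pi_X p E = p e" "pi_X p E \<in> Y"
proof -
  obtain c where c: "c \<in> Y" "p ` E = {c}" using FC_point[OF assms(1)] by blast
  then show "pi_X p E = p e" "pi_X p E \<in> Y" unfolding pi_X_def using assms(2) by auto
qed

lemma pi_uc:
  assumes "\<epsilon> > 0"
  shows "\<exists>\<delta>>0. \<forall>E1\<in>FC. \<forall>E2\<in>FC. hausdorff_dist E1 E2 < \<delta> \<longrightarrow> dist (pi_X p E1) (pi_X p E2) < \<epsilon>"
proof -
  have "\<exists>\<delta>>0. \<forall>x\<in>X. \<forall>x'\<in>X. dist x' x < \<delta> \<longrightarrow> dist (p x') (p x) < \<epsilon>"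
    using puc assms unfolding uniformly_continuous_on_def by blast
  then obtain \<delta> where \<delta>0: "\<delta> > 0" and \<delta>1: "\<forall>x\<in>X. \<forall>x'\<in>X. dist x' x < \<delta> \<longrightarrow> dist (p x') (p x) < \<epsilon>"
    by blast
  have \<delta>: "\<delta> > 0" "\<And>x x'. x \<in> X \<Longrightarrow> x' \<in> X \<Longrightarrow> dist x' x < \<delta> \<Longrightarrow> dist (p x') (p x) < \<epsilon>"
    using \<delta>0 \<delta>1 by auto
  have "dist (pi_X p E1) (pi_X p E2) < \<epsilon>"
    if E: "E1 \<in> FC" "E2 \<in> FC" "hausdorff_dist E1 E2 < \<delta>" for E1 E2
  proof -
    note E1c = hyperspace_compact[OF cX FC_H[THEN subsetD, OF E(1)]]
    note E2c = hyperspace_compact[OF cX FC_H[THEN subsetD, OF E(2)]]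
    obtain e1 where e1: "e1 \<in> E1" using E1c(2) by blast
    obtain e2 where e2: "e2 \<in> E2" "dist e1 e2 < \<delta>"
      using hd_lt1[OF E1c(1) E2c(1) E1c(2) E2c(2) E(3) e1] by blast
    have "dist (p e1) (p e2) < \<epsilon>" using \<delta>(2)[of e2 e1] e1 e2 E1c(3) E2c(3) by (auto simp: dist_commute)
    then show ?thesis using pi_FC(1)[OF E(1) e1] pi_FC(1)[OF E(2) e2(1)] by simp
  qed
  then show ?thesis using \<delta>(1) by blast
qed

sublocale F: Metric_space FC hausdorff_dist by (rule H.subspace[OF FC_H])

lemma F_top: "F.mtopology = subtopology H.mtopology FC"
proof -
  interpret S: Submetric "hyperspace X" hausdorff_dist FC
    by (simp add: Submetric_def Submetric_axioms_def FC_H H.Metric_space_axioms)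
  show ?thesis using S.mtopology_submetric by simp
qed

lemma FC_closedin: "closedin H.mtopology FC"
  unfolding fibre_closure_def by simp

lemma F_compact: "compact_space F.mtopology"
  unfolding F_top
  by (rule compact_space_subtopology, rule closedin_compact_space[OF hyper_compact_space[OF cX] FC_closedin])

lemma pi_cont: "continuous_map F.mtopology euclidean (pi_X p)"
proof -
  have "continuous_map F.mtopology Met_TC.mtopology (pi_X p)"
    unfolding Met_TC.continuous_map_to_metric
  proof (intro ballI allI impI)
    fix E and \<epsilon> :: real assume E: "E \<in> topspace F.mtopology" and \<epsilon>: "\<epsilon> > 0"
    obtain \<delta> where \<delta>: "\<delta> > 0" "\<forall>E1\<in>FC. \<forall>E2\<in>FC. hausdorff_dist E1 E2 < \<delta> \<longrightarrow> dist (pi_X p E1) (pi_X p E2) < \<epsilon>"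
      using pi_uc[OF \<epsilon>] by blast
    show "\<exists>U. openin F.mtopology U \<and> E \<in> U \<and> (\<forall>y\<in>U. pi_X p y \<in> Met_TC.mball (pi_X p E) \<epsilon>)"
    proof (intro exI conjI)
      show "openin F.mtopology (F.mball E \<delta>)" by simp
      show "E \<in> F.mball E \<delta>" using E \<delta>(1) by simp
      show "\<forall>y\<in>F.mball E \<delta>. pi_X p y \<in> Met_TC.mball (pi_X p E) \<epsilon>"
      proof
        fix y assume "y \<in> F.mball E \<delta>"
        then have "E \<in> FC" "y \<in> FC" "hausdorff_dist E y < \<delta>" by auto
        then have "dist (pi_X p E) (pi_X p y) < \<epsilon>" using \<delta>(2) by blast
        then show "pi_X p y \<in> Met_TC.mball (pi_X p E) \<epsilon>" by simp
      qed
    qed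
  qed
  then show ?thesis by simp
qed

lemma pi_meas:
  assumes "E \<in> FC"
  shows "pi_X p ` F.mball E e \<in> sets \<nu>"
proof -
  define K where "K n = F.mcball E (e - 1 / Suc n)" for n :: nat
  have un: "F.mball E e = (\<Union>n. K n)"
  proof
    show "F.mball E e \<subseteq> (\<Union>n. K n)"
    proof
      fix E' assume E': "E' \<in> F.mball E e"
      then have "e - hausdorff_dist E E' > 0" by auto
      then obtain n where n: "n > 0" "inverse (real n) < e - hausdorff_dist E E'"
        using ex_inverse_of_nat_less by blast
      have "1 / real (Suc n) \<le> inverse (real n)" using n(1) by (simp add: inverse_eq_divide frac_le)
      then have "1 / real (Suc n) < e - hausdorff_dist E E'" using n(2) by linarith
      then have "E' \<in> K n" using E' unfolding K_def by (auto simp: field_simps)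
      then show "E' \<in> (\<Union>n. K n)" by blast
    qed
    show "(\<Union>n. K n) \<subseteq> F.mball E e"
    proof
      fix E' assume "E' \<in> (\<Union>n. K n)"
      then obtain n where "E' \<in> K n" by blast
      then have h: "hausdorff_dist E E' \<le> e - 1 / real (Suc n)" "E' \<in> FC" "E \<in> FC"
        unfolding K_def by (auto simp del: of_nat_Suc)
      have pos: "1 / real (Suc n) > 0" by (simp del: of_nat_Suc)
      have "hausdorff_dist E E' < e" using h(1) pos by linarith
      then show "E' \<in> F.mball E e" using h by simp
    qed
  qed
  have cl: "closed (pi_X p ` K n)" for n
  proof -
    have "compactin F.mtopology (K n)"
      unfolding K_def by (rule closedin_compact_space[OF F_compact F.closedin_mcball])
    then have "compactin euclidean (pi_X p ` K n)" by (rule image_compactin[OF _ pi_cont])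
    then show ?thesis by (simp add: compact_imp_closed)
  qed
  have "pi_X p ` F.mball E e = (\<Union>n. pi_X p ` K n)" unfolding un by blast
  also have "\<dots> \<in> sets borel" using cl by (intro sets.countable_UN) auto
  finally have B: "pi_X p ` F.mball E e \<in> sets borel" .
  have sub: "pi_X p ` F.mball E e \<subseteq> Y"
  proof
    fix c assume "c \<in> pi_X p ` F.mball E e"
    then obtain E' where E': "E' \<in> FC" "c = pi_X p E'" by auto
    obtain x where "x \<in> E'" using hyperspace_compact(2)[OF cX FC_H[THEN subsetD, OF E'(1)]] by blast
    then show "c \<in> Y" using pi_FC(2)[OF E'(1)] E'(2) by simp
  qed
  have Yb: "Y \<inter> space borel \<in> sets borel" using compact_imp_closed[OF cY] by simp
  have "sets \<nu> = sets (restrict_space borel Y)" using invp unfolding invariant_prob_def by auto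
  then show ?thesis using sets_restrict_space_iff[OF Yb] B sub by simp
qed

lemma Vsub: "Vset X p Y \<nu> F0 \<subseteq> p ` F0"
proof
  fix y assume "y \<in> Vset X p Y \<nu> F0"
  then obtain E where E: "E \<in> fibre_meas X p Y \<nu>" "E \<subseteq> F0" "pi_X p E = y"
    unfolding Vset_def by auto
  have EF: "E \<in> FC" using E(1) unfolding fibre_meas_def by auto
  obtain e where "e \<in> E" using hyperspace_compact(2)[OF cX FC_H[THEN subsetD, OF EF]] by blast
  then show "y \<in> p ` F0" using pi_FC(1)[OF EF] E by auto
qed

end



context setting
begin

lemma eq_by_dist: fixes a b :: "'c::metric_space"
  assumes "\<And>\<epsilon>. \<epsilon> > 0 \<Longrightarrow> dist a b < \<epsilon>" shows "a = b"
  using assms[of "dist a b"] by (metis dist_nz less_irrefl)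

lemma meas_mono_pi:
  assumes "E \<in> FC" "A \<subseteq> pi_X p ` F.mball E e"
  shows "measure \<nu> A \<le> measure \<nu> (pi_X p ` F.mball E e)"
proof -
  interpret N: prob_space \<nu> using invp unfolding invariant_prob_def by auto
  show ?thesis by (rule N.finite_measure_mono[OF assms(2) pi_meas[OF assms(1)]])
qed

lemma V_limit:
  fixes Fk :: "nat \<Rightarrow> 'a set"
  assumes \<sigma>V: "\<And>k. Fk k \<in> hyperspace X" "\<And>k. Vset X p Y \<nu> (Fk k) = p ` (Fk k)"
    and lH: "l \<in> hyperspace X"
    and lim: "\<And>\<epsilon>. \<epsilon> > 0 \<Longrightarrow> \<exists>N. \<forall>n\<ge>N. hausdorff_dist (Fk n) l < \<epsilon>"
  shows "Vset X p Y \<nu> l = p ` l"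
proof
  show "Vset X p Y \<nu> l \<subseteq> p ` l" by (rule Vsub)
  show "p ` l \<subseteq> Vset X p Y \<nu> l"
  proof
    fix z assume "z \<in> p ` l"
    then obtain x where x: "x \<in> l" "z = p x" by blast
    note lc = hyperspace_compact[OF cX lH]
    note Fc = hyperspace_compact[OF cX \<sigma>V(1)]
    have "\<exists>xk. xk \<in> Fk k \<and> dist x xk \<le> hausdorff_dist l (Fk k)" for k
      using hd_le_iff[OF lc(1) Fc(1) lc(2) Fc(2), of k "hausdorff_dist l (Fk k)"] x(1) by blast
    then obtain xs where xs: "\<And>k. xs k \<in> Fk k" "\<And>k. dist x (xs k) \<le> hausdorff_dist l (Fk k)"
      by metis
    have "p (xs k) \<in> Vset X p Y \<nu> (Fk k)" for k using \<sigma>V(2)[of k] xs(1)[of k] by blast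
    then have "\<exists>E. E \<in> fibre_meas X p Y \<nu> \<and> E \<subseteq> Fk k \<and> pi_X p E = p (xs k)" for k
      unfolding Vset_def by blast
    then obtain Es where Es: "\<And>k. Es k \<in> fibre_meas X p Y \<nu>" "\<And>k. Es k \<subseteq> Fk k"
        "\<And>k. pi_X p (Es k) = p (xs k)"
      by metis
    have EsFC: "Es k \<in> FC" for k using Es(1) unfolding fibre_meas_def by blast
    have EsH: "Es k \<in> hyperspace X" for k using EsFC FC_H by blast
    obtain E s where E: "E \<in> hyperspace X" and s: "strict_mono s"
      and Elim: "limitin H.mtopology (Es \<circ> s) E sequentially"
      using hyper_compact_space[OF cX] EsH unfolding H.compact_space_sequentially by blast
    have Elim': "\<exists>N. \<forall>n\<ge>N. hausdorff_dist (Es (s n)) E < \<epsilon>" if \<epsilon>0: "\<epsilon> > 0" for \<epsilon>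
    proof -
      obtain N where "\<forall>n\<ge>N. (Es \<circ> s) n \<in> hyperspace X \<and> hausdorff_dist ((Es \<circ> s) n) E < \<epsilon>"
        using Elim \<epsilon>0 unfolding H.limit_metric_sequentially by blast
      then show ?thesis by auto
    qed
    have Flim': "\<exists>N. \<forall>n\<ge>N. hausdorff_dist (Fk (s n)) l < \<epsilon>" if \<epsilon>0: "\<epsilon> > 0" for \<epsilon>
    proof -
      obtain N where N: "\<forall>n\<ge>N. hausdorff_dist (Fk n) l < \<epsilon>" using lim \<epsilon>0 by blast
      have "s n \<ge> N" if "n \<ge> N" for n using seq_suble[OF s, of n] that by linarith
      then show ?thesis using N by blast
    qed
    have both: "\<exists>j. hausdorff_dist (Es (s j)) E < \<epsilon>1 \<and> hausdorff_dist (Fk (s j)) l < \<epsilon>2"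
      if \<epsilon>12: "\<epsilon>1 > 0" "\<epsilon>2 > 0" for \<epsilon>1 \<epsilon>2
    proof -
      obtain N1 where N1: "\<forall>n\<ge>N1. hausdorff_dist (Es (s n)) E < \<epsilon>1" using Elim' \<epsilon>12(1) by blast
      obtain N2 where N2: "\<forall>n\<ge>N2. hausdorff_dist (Fk (s n)) l < \<epsilon>2" using Flim' \<epsilon>12(2) by blast
      show ?thesis using N1[rule_format, of "max N1 N2"] N2[rule_format, of "max N1 N2"] by auto
    qed
    note Ec = hyperspace_compact[OF cX E]
    note Esc = hyperspace_compact[OF cX EsH]
    have EFC: "E \<in> FC"
      by (rule limitin_closedin[OF Elim FC_closedin]) (auto simp: EsFC)
    have "E \<subseteq> l"
    proof
      fix w assume w: "w \<in> E"
      have "\<exists>u\<in>l. dist u w < \<epsilon>" if \<epsilon>: "\<epsilon> > 0" for \<epsilon>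
      proof -
        obtain j where j: "hausdorff_dist (Es (s j)) E < \<epsilon>/2" "hausdorff_dist (Fk (s j)) l < \<epsilon>/2"
          using both[of "\<epsilon>/2" "\<epsilon>/2"] \<epsilon> by auto
        obtain v where v: "v \<in> Es (s j)" "dist v w < \<epsilon>/2"
          using hd_lt2[OF Esc(1) Ec(1) Esc(2) Ec(2) j(1) w] by blast
        have "v \<in> Fk (s j)" using v(1) Es(2) by blast
        then obtain u where u: "u \<in> l" "dist v u < \<epsilon>/2"
          using hd_lt1[OF Fc(1) lc(1) Fc(2) lc(2) j(2)] by blast
        have "dist u w \<le> dist v u + dist v w" by (rule dist_triangle3)
        then show ?thesis using u v by (intro bexI[of _ u]) auto
      qed
      then have "w \<in> closure l" unfolding closure_approachable by blast
      then show "w \<in> l" using lc(4) by (simp add: closure_closed)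
    qed
    have "pi_X p E = p x"
    proof (rule eq_by_dist)
      fix \<epsilon> :: real assume \<epsilon>: "\<epsilon> > 0"
      obtain \<delta>1 where \<delta>1: "\<delta>1 > 0" "\<forall>E1\<in>FC. \<forall>E2\<in>FC. hausdorff_dist E1 E2 < \<delta>1 \<longrightarrow> dist (pi_X p E1) (pi_X p E2) < \<epsilon>/2"
        using pi_uc[of "\<epsilon>/2"] \<epsilon> by auto
      have "\<exists>\<delta>>0. \<forall>x\<in>X. \<forall>x'\<in>X. dist x' x < \<delta> \<longrightarrow> dist (p x') (p x) < \<epsilon>/2"
      proof -
        have "\<epsilon>/2 > 0" using \<epsilon> by simp
        then show ?thesis using puc unfolding uniformly_continuous_on_def by blast
      qed
      then obtain \<delta>2 where \<delta>2: "\<delta>2 > 0" "\<forall>x\<in>X. \<forall>x'\<in>X. dist x' x < \<delta>2 \<longrightarrow> dist (p x') (p x) < \<epsilon>/2"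
        by blast
      obtain j where j: "hausdorff_dist (Es (s j)) E < \<delta>1" "hausdorff_dist (Fk (s j)) l < \<delta>2"
        using both \<delta>1(1) \<delta>2(1) by blast
      have d1: "dist (pi_X p (Es (s j))) (pi_X p E) < \<epsilon>/2" using \<delta>1(2) EsFC EFC j(1) by blast
      have "dist x (xs (s j)) < \<delta>2" using xs(2)[of "s j"] j(2) hd_sym[of l] by simp
      moreover have "x \<in> X" "xs (s j) \<in> X" using x(1) lc(3) xs(1) Fc(3) by blast+
      ultimately have d2: "dist (p (xs (s j))) (p x) < \<epsilon>/2" using \<delta>2(2) by (simp add: dist_commute)
      have "dist (pi_X p E) (p x) \<le> dist (pi_X p (Es (s j))) (pi_X p E) + dist (p (xs (s j))) (p x)"
        using dist_triangle3[of "pi_X p E" "p x" "pi_X p (Es (s j))"] Es(3)[of "s j"] by simp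
      then show "dist (pi_X p E) (p x) < \<epsilon>" using d1 d2 by linarith
    qed
    have "E \<in> fibre_meas X p Y \<nu>"
      unfolding fibre_meas_def mem_Collect_eq
    proof (intro conjI allI impI EFC)
      fix e :: real assume e: "e > 0"
      obtain j where j: "hausdorff_dist (Es (s j)) E < e/2"
        using both[of "e/2" 1] e by auto
      have pos: "measure \<nu> (pi_X p ` F.mball (Es (s j)) (e/2)) > 0"
        using Es(1)[of "s j"] e unfolding fibre_meas_def by auto
      have "F.mball (Es (s j)) (e/2) \<subseteq> F.mball E e"
      proof
        fix E' assume E': "E' \<in> F.mball (Es (s j)) (e/2)"
        then have E'FC: "E' \<in> FC" and d: "hausdorff_dist (Es (s j)) E' < e/2" by auto
        have "hausdorff_dist E E' \<le> hausdorff_dist E (Es (s j)) + hausdorff_dist (Es (s j)) E'"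
          using H.triangle[of E "Es (s j)" E'] E EsH E'FC FC_H by blast
        then have "hausdorff_dist E E' < e" using j d hd_sym[of E "Es (s j)"] by linarith
        then show "E' \<in> F.mball E e" using EFC E'FC by simp
      qed
      then have "measure \<nu> (pi_X p ` F.mball (Es (s j)) (e/2)) \<le> measure \<nu> (pi_X p ` F.mball E e)"
        by (intro meas_mono_pi EFC) blast
      then show "0 < measure \<nu> (pi_X p ` F.mball E e)" using pos by linarith
    qed
    moreover have "p x \<in> Y" using x(1) lc(3) pXY by blast
    ultimately show "z \<in> Vset X p Y \<nu> l"
      unfolding Vset_def using \<open>E \<subseteq> l\<close> \<open>pi_X p E = p x\<close> x(2) by blast
  qed
qed


lemma actX: "act g ` X \<subseteq> X" "continuous_on X (act g)"
  using tdsX unfolding tds_def by auto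
lemma act_inv: "x \<in> X \<Longrightarrow> act (-g) (act g x) = x" "x \<in> X \<Longrightarrow> act g (act (-g) x) = x"
proof -
  assume x: "x \<in> X"
  have "act g x \<in> X" "act (-g) x \<in> X" using actX x by blast+
  then show "act (-g) (act g x) = x" "act g (act (-g) x) = x"
    using tdsX x unfolding tds_def by (metis add.left_inverse add.right_inverse)+
qed
lemma actYY: "y \<in> Y \<Longrightarrow> actY g y \<in> Y" using tdsY unfolding tds_def by auto
lemma actY_inv: "y \<in> Y \<Longrightarrow> actY (-g) (actY g y) = y" "y \<in> Y \<Longrightarrow> actY g (actY (-g) y) = y"
proof -
  assume y: "y \<in> Y"
  show "actY (-g) (actY g y) = y" "actY g (actY (-g) y) = y"
    using tdsY y actYY unfolding tds_def by (metis add.left_inverse add.right_inverse)+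
qed

lemma phiH: assumes "A \<in> hyperspace X" shows "act g ` A \<in> hyperspace X"
proof -
  note Ac = hyperspace_compact[OF cX assms]
  have "compact (act g ` A)"
    by (rule compact_continuous_image[OF continuous_on_subset[OF actX(2) Ac(3)] Ac(1)])
  then show ?thesis using Ac actX(1) unfolding hyperspace_def by (auto simp: compact_imp_closed)
qed

lemma phi_uc:
  assumes "\<epsilon> > 0"
  shows "\<exists>\<delta>>0. \<forall>A\<in>hyperspace X. \<forall>B\<in>hyperspace X. hausdorff_dist A B < \<delta> \<longrightarrow>
            hausdorff_dist (act g ` A) (act g ` B) < \<epsilon>"
proof -
  have uc: "uniformly_continuous_on X (act g)" by (rule compact_uniformly_continuous[OF actX(2) cX])
  have "\<epsilon>/2 > 0" using assms by simp
  then have "\<exists>\<delta>>0. \<forall>x\<in>X. \<forall>x'\<in>X. dist x' x < \<delta> \<longrightarrow> dist (act g x') (act g x) < \<epsilon>/2"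
    using uc unfolding uniformly_continuous_on_def by blast
  then obtain \<delta> where \<delta>0: "\<delta> > 0" and \<delta>1: "\<forall>x\<in>X. \<forall>x'\<in>X. dist x' x < \<delta> \<longrightarrow> dist (act g x') (act g x) < \<epsilon>/2"
    by blast
  have "hausdorff_dist (act g ` A) (act g ` B) < \<epsilon>"
    if A: "A \<in> hyperspace X" and B: "B \<in> hyperspace X" and d: "hausdorff_dist A B < \<delta>" for A B
  proof -
    note Ac = hyperspace_compact[OF cX A]
    note Bc = hyperspace_compact[OF cX B]
    note gAc = hyperspace_compact[OF cX phiH[OF A]]
    note gBc = hyperspace_compact[OF cX phiH[OF B]]
    have "hausdorff_dist (act g ` A) (act g ` B) \<le> \<epsilon>/2"
      unfolding hd_le_iff[OF gAc(1) gBc(1) gAc(2) gBc(2)]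
    proof (intro conjI ballI)
      fix a' assume "a' \<in> act g ` A"
      then obtain a where a: "a \<in> A" "a' = act g a" by blast
      obtain b where b: "b \<in> B" "dist a b < \<delta>" using hd_lt1[OF Ac(1) Bc(1) Ac(2) Bc(2) d a(1)] by blast
      have "dist (act g a) (act g b) < \<epsilon>/2" using \<delta>1 a(1) b Ac(3) Bc(3) by (auto simp: dist_commute)
      then show "\<exists>b'\<in>act g ` B. dist a' b' \<le> \<epsilon>/2" using a b by (intro bexI[of _ "act g b"]) auto
    next
      fix b' assume "b' \<in> act g ` B"
      then obtain b where b: "b \<in> B" "b' = act g b" by blast
      obtain a where a: "a \<in> A" "dist a b < \<delta>" using hd_lt2[OF Ac(1) Bc(1) Ac(2) Bc(2) d b(1)] by blast
      have "dist (act g a) (act g b) < \<epsilon>/2" using \<delta>1 a b(1) Ac(3) Bc(3) by (auto simp: dist_commute)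
      then show "\<exists>a'\<in>act g ` A. dist a' b' \<le> \<epsilon>/2" using a b by (intro bexI[of _ "act g a"]) auto
    qed
    then show ?thesis using assms by linarith
  qed
  then show ?thesis using \<delta>0 by blast
qed

lemma phi_fib: assumes "y \<in> Y" shows "act g ` (p -` {y} \<inter> X) = p -` {actY g y} \<inter> X"
proof (intro equalityI subsetI)
  fix z assume "z \<in> act g ` (p -` {y} \<inter> X)"
  then obtain x where x: "x \<in> X" "p x = y" "z = act g x" by blast
  then show "z \<in> p -` {actY g y} \<inter> X" using peq[OF x(1)] actX(1) by auto
next
  fix z assume z: "z \<in> p -` {actY g y} \<inter> X"
  then have zX: "z \<in> X" and pz: "p z = actY g y" by auto
  have x: "act (-g) z \<in> X" using actX(1) zX by blast
  have "p (act (-g) z) = actY (-g) (actY g y)" using peq[OF zX, of "-g"] pz by simp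
  also have "\<dots> = y" using actY_inv(1)[OF assms] .
  finally have "act (-g) z \<in> p -` {y} \<inter> X" using x by simp
  moreover have "z = act g (act (-g) z)" using act_inv(2)[OF zX] by simp
  ultimately show "z \<in> act g ` (p -` {y} \<inter> X)" by blast
qed

lemma phi_FC: assumes "E \<in> FC" shows "act g ` E \<in> FC"
proof -
  have EH: "E \<in> hyperspace X" and R: "\<forall>r>0. \<exists>y\<in>Y. hausdorff_dist E (p -` {y} \<inter> X) < r"
    using assms unfolding FC_char[of E] by auto
  have "\<exists>y\<in>Y. hausdorff_dist (act g ` E) (p -` {y} \<inter> X) < r" if r: "r > 0" for r
  proof -
    obtain \<delta> where \<delta>: "\<delta> > 0" "\<forall>A\<in>hyperspace X. \<forall>B\<in>hyperspace X. hausdorff_dist A B < \<delta> \<longrightarrow>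
            hausdorff_dist (act g ` A) (act g ` B) < r"
      using phi_uc[OF r] by blast
    obtain y where y: "y \<in> Y" "hausdorff_dist E (p -` {y} \<inter> X) < \<delta>" using R \<delta>(1) by blast
    have "hausdorff_dist (act g ` E) (act g ` (p -` {y} \<inter> X)) < r"
      using \<delta>(2) EH fibH[OF y(1)] y(2) by blast
    then show ?thesis using phi_fib[OF y(1)] actYY[OF y(1)] by auto
  qed
  then show ?thesis unfolding FC_char[of "act g ` E"] using phiH[OF EH] by blast
qed

lemma phi_pi: assumes "E \<in> FC" shows "pi_X p (act g ` E) = actY g (pi_X p E)"
proof -
  obtain e where e: "e \<in> E" using hyperspace_compact(2)[OF cX FC_H[THEN subsetD, OF assms]] by blast
  have eX: "e \<in> X" using hyperspace_compact(3)[OF cX FC_H[THEN subsetD, OF assms]] e by blast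
  have "pi_X p (act g ` E) = p (act g e)" using pi_FC(1)[OF phi_FC[OF assms]] e by blast
  also have "\<dots> = actY g (p e)" using peq[OF eX] .
  also have "\<dots> = actY g (pi_X p E)" using pi_FC(1)[OF assms e] by simp
  finally show ?thesis .
qed

lemma measure_actY: assumes "A \<in> sets \<nu>" "A \<subseteq> Y" shows "measure \<nu> (actY g ` A) = measure \<nu> A"
proof -
  have eq: "actY g ` A = actY (-g) -` A \<inter> Y"
  proof (intro equalityI subsetI)
    fix z assume "z \<in> actY g ` A"
    then obtain a where a: "a \<in> A" "z = actY g a" by blast
    then show "z \<in> actY (-g) -` A \<inter> Y" using assms(2) actYY actY_inv(1) by auto
  next
    fix z assume z: "z \<in> actY (-g) -` A \<inter> Y"
    then have "z = actY g (actY (-g) z)" using actY_inv(2) by auto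
    then show "z \<in> actY g ` A" using z by blast
  qed
  have "emeasure \<nu> (actY (-g) -` A \<inter> Y) = emeasure \<nu> A"
    using invp assms(1) unfolding invariant_prob_def by blast
  then show ?thesis unfolding eq measure_def by simp
qed

lemma phi_meas: assumes "E \<in> fibre_meas X p Y \<nu>" shows "act g ` E \<in> fibre_meas X p Y \<nu>"
proof -
  have EFC: "E \<in> FC" and pos: "\<forall>e>0. measure \<nu> (pi_X p ` F.mball E e) > 0"
    using assms unfolding fibre_meas_def by auto
  have gFC: "act g ` E \<in> FC" by (rule phi_FC[OF EFC])
  have "measure \<nu> (pi_X p ` F.mball (act g ` E) e) > 0" if e: "e > 0" for e
  proof -
    obtain \<delta> where \<delta>: "\<delta> > 0" "\<forall>A\<in>hyperspace X. \<forall>B\<in>hyperspace X. hausdorff_dist A B < \<delta> \<longrightarrow>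
            hausdorff_dist (act g ` A) (act g ` B) < e"
      using phi_uc[OF e] by blast
    define A where "A = pi_X p ` F.mball E \<delta>"
    have Am: "A \<in> sets \<nu>" unfolding A_def by (rule pi_meas[OF EFC])
    have AY: "A \<subseteq> Y"
    proof
      fix c assume "c \<in> A"
      then obtain E' where E': "E' \<in> FC" "c = pi_X p E'" unfolding A_def by auto
      obtain x where "x \<in> E'" using hyperspace_compact(2)[OF cX FC_H[THEN subsetD, OF E'(1)]] by blast
      then show "c \<in> Y" using pi_FC(2)[OF E'(1)] E'(2) by simp
    qed
    have sub: "actY g ` A \<subseteq> pi_X p ` F.mball (act g ` E) e"
    proof
      fix c assume "c \<in> actY g ` A"
      then obtain E' where E': "E' \<in> F.mball E \<delta>" "c = actY g (pi_X p E')" unfolding A_def by auto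
      then have E'FC: "E' \<in> FC" and d: "hausdorff_dist E E' < \<delta>" by auto
      have "hausdorff_dist (act g ` E) (act g ` E') < e"
        using \<delta>(2) FC_H EFC E'FC d by blast
      then have "act g ` E' \<in> F.mball (act g ` E) e" using gFC phi_FC[OF E'FC] by simp
      moreover have "c = pi_X p (act g ` E')" using phi_pi[OF E'FC] E'(2) by simp
      ultimately show "c \<in> pi_X p ` F.mball (act g ` E) e" by blast
    qed
    have "measure \<nu> A > 0" unfolding A_def using pos \<delta>(1) by blast
    also have "measure \<nu> A = measure \<nu> (actY g ` A)" using measure_actY[OF Am AY] by simp
    also have "\<dots> \<le> measure \<nu> (pi_X p ` F.mball (act g ` E) e)" by (rule meas_mono_pi[OF gFC sub])
    finally show ?thesis .
  qed
  then show ?thesis unfolding fibre_meas_def using gFC by blast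
qed

lemma V_inv:
  assumes FH: "F0 \<in> hyperspace X" and FV: "Vset X p Y \<nu> F0 = p ` F0"
  shows "act g ` F0 \<in> hyperspace X \<and> Vset X p Y \<nu> (act g ` F0) = p ` (act g ` F0)"
proof (intro conjI equalityI)
  show "act g ` F0 \<in> hyperspace X" by (rule phiH[OF FH])
  show "Vset X p Y \<nu> (act g ` F0) \<subseteq> p ` act g ` F0" by (rule Vsub)
  show "p ` act g ` F0 \<subseteq> Vset X p Y \<nu> (act g ` F0)"
  proof
    fix z assume "z \<in> p ` act g ` F0"
    then obtain x where x: "x \<in> F0" "z = p (act g x)" by blast
    have xX: "x \<in> X" using hyperspace_compact(3)[OF cX FH] x(1) by blast
    have "p x \<in> Vset X p Y \<nu> F0" using FV x(1) by blast
    then obtain E where E: "E \<in> fibre_meas X p Y \<nu>" "E \<subseteq> F0" "pi_X p E = p x"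
      unfolding Vset_def by blast
    have EFC: "E \<in> FC" using E(1) unfolding fibre_meas_def by blast
    have "act g ` E \<in> fibre_meas X p Y \<nu>" by (rule phi_meas[OF E(1)])
    moreover have "act g ` E \<subseteq> act g ` F0" using E(2) by blast
    moreover have "pi_X p (act g ` E) = z" using phi_pi[OF EFC] E(3) x(2) peq[OF xX] by simp
    moreover have "z \<in> Y" using x(2) xX actX(1) pXY by blast
    ultimately show "z \<in> Vset X p Y \<nu> (act g ` F0)" unfolding Vset_def by blast
  qed
qed

lemma V_compact:
  "compactin H.mtopology {F \<in> hyperspace X. Vset X p Y \<nu> F = p ` F}"
  unfolding H.compactin_sequentially
proof (intro conjI allI impI)
  show "{F \<in> hyperspace X. Vset X p Y \<nu> F = p ` F} \<subseteq> hyperspace X" by blast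
  fix \<sigma> :: "nat \<Rightarrow> 'a set"
  assume \<sigma>: "range \<sigma> \<subseteq> {F \<in> hyperspace X. Vset X p Y \<nu> F = p ` F}"
  then have \<sigma>H: "\<And>k. \<sigma> k \<in> hyperspace X" and \<sigma>V: "\<And>k. Vset X p Y \<nu> (\<sigma> k) = p ` (\<sigma> k)" by auto
  obtain l r where l: "l \<in> hyperspace X" and r: "strict_mono r"
      and lim: "limitin H.mtopology (\<sigma> \<circ> r) l sequentially"
    using hyper_compact_space[OF cX] \<sigma>H unfolding H.compact_space_sequentially by blast
  have lim': "\<exists>N. \<forall>n\<ge>N. hausdorff_dist (\<sigma> (r n)) l < \<epsilon>" if \<epsilon>0: "\<epsilon> > 0" for \<epsilon>
  proof -
    obtain N where "\<forall>n\<ge>N. (\<sigma> \<circ> r) n \<in> hyperspace X \<and> hausdorff_dist ((\<sigma> \<circ> r) n) l < \<epsilon>"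
      using lim \<epsilon>0 unfolding H.limit_metric_sequentially by blast
    then show ?thesis by auto
  qed
  have "Vset X p Y \<nu> l = p ` l"
    by (rule V_limit[of "\<sigma> \<circ> r"]) (use \<sigma>H \<sigma>V l lim' in auto)
  then show "\<exists>l r. l \<in> {F \<in> hyperspace X. Vset X p Y \<nu> F = p ` F} \<and> strict_mono r \<and>
       limitin H.mtopology (\<sigma> \<circ> r) l sequentially"
    using l r lim by blast
qed

end

theorem lemma3p7:
  fixes X :: "'a::metric_space set" and act :: "'g::group_add \<Rightarrow> 'a \<Rightarrow> 'a"
    and Y :: "'b::metric_space set" and actY :: "'g \<Rightarrow> 'b \<Rightarrow> 'b"
    and p :: "'a \<Rightarrow> 'b" and \<nu> :: "'b measure"
  assumes "countable (UNIV :: 'g set)" and "infinite (UNIV :: 'g set)"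
    and "minimal_tds X act"
    and "max_eq_factor X act Y actY p"
    and "invariant_prob Y actY \<nu>"
    and "\<forall>\<mu>. invariant_prob Y actY \<mu> \<longrightarrow> \<mu> = \<nu>"
  defines "\<V> \<equiv> {F \<in> hyperspace X. Vset X p Y \<nu> F = p ` F}"
  shows "compactin (hyper_top X) \<V> \<and> (\<forall>g. \<forall>F\<in>\<V>. act g ` F \<in> \<V>)"
proof -
  interpret S: setting X act Y actY p \<nu>
  proof
    show "tds X act" using assms(3) unfolding minimal_tds_def by blast
    show "tds Y actY" using assms(4) unfolding max_eq_factor_def by blast
    show "factor_map X act Y actY p" using assms(4) unfolding max_eq_factor_def by blast
    show "invariant_prob Y actY \<nu>" by (rule assms(5))
  qed
  show ?thesis
  proof
    show "compactin (hyper_top X) \<V>" unfolding \<V>_def by (rule S.V_compact)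
    show "\<forall>g. \<forall>F\<in>\<V>. act g ` F \<in> \<V>"
      unfolding \<V>_def using S.V_inv by blast
  qed
qed

end
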